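(* For every even integer $k\geq 2$ there is an undirected graph $G$ with degeneracy at most $k$, $n(G)=\frac{(k+2)k}{2}+1$ and $f(G)=\frac{k^2}{2}$.
   Context: All graphs are finite and simple. $n(G)$ is the number of vertices and $f(G)$ is the minimum size of a feedback vertex set of $G$ (a set $F\subseteq V(G)$ with $G-F$ acyclic). An ordering $\phi$ of $V(G)$ is a $k$-elimination ordering if each vertex has at most $k$ neighbours preceding it in $\phi$; the degeneracy of $G$ is the least $k$ such that $G$ has a $k$-elimination ordering. *)

theory Defs
  imports Main
begin

definition simple_graph :: "'a set \<Rightarrow> 'a set set \<Rightarrow> bool" where
  "simple_graph V E \<longleftrightarrow> finite V \<and>
     (\<forall>e\<in>E. \<exists>u v. u \<noteq> v \<and> u \<in> V \<and> v \<in> V \<and> e = {u, v})"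

definition is_cycle :: "'a set \<Rightarrow> 'a set set \<Rightarrow> 'a list \<Rightarrow> bool" where
  "is_cycle V E cs \<longleftrightarrow> length cs \<ge> 3 \<and> distinct cs \<and> set cs \<subseteq> V \<and>
     (\<forall>i < length cs. {cs ! i, cs ! ((i + 1) mod length cs)} \<in> E)"

definition acyclic_graph :: "'a set \<Rightarrow> 'a set set \<Rightarrow> bool" where
  "acyclic_graph V E \<longleftrightarrow> \<not> (\<exists>cs. is_cycle V E cs)"

definition delete_vertices :: "'a set set \<Rightarrow> 'a set \<Rightarrow> 'a set set" where
  "delete_vertices E F = {e \<in> E. e \<inter> F = {}}"

definition is_fvs :: "'a set \<Rightarrow> 'a set set \<Rightarrow> 'a set \<Rightarrow> bool" where
  "is_fvs V E F \<longleftrightarrow> F \<subseteq> V \<and> acyclic_graph (V - F) (delete_vertices E F)"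

definition fvs_number :: "'a set \<Rightarrow> 'a set set \<Rightarrow> nat" where
  "fvs_number V E = (LEAST n. \<exists>F. is_fvs V E F \<and> card F = n)"

definition is_elim_ordering :: "'a set \<Rightarrow> 'a set set \<Rightarrow> nat \<Rightarrow> 'a list \<Rightarrow> bool" where
  "is_elim_ordering V E k xs \<longleftrightarrow> distinct xs \<and> set xs = V \<and>
     (\<forall>i < length xs. card {j. j < i \<and> {xs ! j, xs ! i} \<in> E} \<le> k)"

definition degeneracy :: "'a set \<Rightarrow> 'a set set \<Rightarrow> nat" where
  "degeneracy V E = (LEAST k. \<exists>xs. is_elim_ordering V E k xs)"

end

theory Submission
  imports Defs
begin

definition Pr :: "nat \<Rightarrow> nat \<Rightarrow> nat \<Rightarrow> bool" where
  "Pr K x y \<longleftrightarrow> (x div K = y div K \<and> \<not> (x mod K = 0 \<and> y mod K = K - 1))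
     \<or> (x mod K = 0 \<and> y mod K = 0) \<or> (x mod K = K - 1 \<and> y mod K = 0)"

definition GE :: "nat \<Rightarrow> nat \<Rightarrow> nat set set" where
  "GE K n = {{x, y} | x y. x < y \<and> y < n \<and> Pr K x y}"

lemma GE_iff: "{a, b} \<in> GE K n \<longleftrightarrow> (a < b \<and> b < n \<and> Pr K a b) \<or> (b < a \<and> a < n \<and> Pr K b a)"
  unfolding GE_def by (auto simp: doubleton_eq_iff)

lemma tri_cycle:
  assumes "distinct [a, b, c]" "{a, b, c} \<subseteq> S" "{a, b} \<in> E" "{b, c} \<in> E" "{c, a} \<in> E"
  shows "is_cycle S E [a, b, c]"
  unfolding is_cycle_def
proof (intro conjI allI impI)
  fix i assume "i < length [a, b, c]"
  then have "i = 0 \<or> i = 1 \<or> i = 2" by auto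
  then show "{[a, b, c] ! i, [a, b, c] ! ((i + 1) mod length [a, b, c])} \<in> E"
    using assms by auto
qed (use assms in auto)

lemma quad_cycle:
  assumes "distinct [a, b, c, d]" "{a, b, c, d} \<subseteq> S" "{a, b} \<in> E" "{b, c} \<in> E" "{c, d} \<in> E" "{d, a} \<in> E"
  shows "is_cycle S E [a, b, c, d]"
  unfolding is_cycle_def
proof (intro conjI allI impI)
  fix i assume "i < length [a, b, c, d]"
  then have "i = 0 \<or> i = 1 \<or> i = 2 \<or> i = 3" by auto
  then show "{[a, b, c, d] ! i, [a, b, c, d] ! ((i + 1) mod length [a, b, c, d])} \<in> E"
    using assms by auto
qed (use assms in auto)

lemma matching_acyclic:
  assumes "\<And>v a b. v \<in> W \<Longrightarrow> a \<in> W \<Longrightarrow> b \<in> W \<Longrightarrow> {v, a} \<in> E \<Longrightarrow> {v, b} \<in> E \<Longrightarrow> a = b"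
  shows "acyclic_graph W E"
  unfolding acyclic_graph_def
proof
  assume "\<exists>cs. is_cycle W E cs"
  then obtain cs where c: "is_cycle W E cs" by blast
  then have l: "length cs \<ge> 3" and d: "distinct cs" and s: "set cs \<subseteq> W"
    and e: "\<forall>i < length cs. {cs ! i, cs ! ((i + 1) mod length cs)} \<in> E"
    unfolding is_cycle_def by auto
  have e0: "{cs ! 0, cs ! 1} \<in> E" using e[rule_format, of 0] l by (metis One_nat_def add_0 length_greater_0_conv less_le_trans mod_less numeral_3_eq_3 zero_less_Suc Suc_le_eq less_Suc_eq)
  have e1: "{cs ! 1, cs ! 2} \<in> E" using e[rule_format, of 1] l by (simp add: numeral_2_eq_2)
  have l2: "2 < length cs" "1 < length cs" "0 < length cs" using l by auto
  have n02: "cs ! 0 \<noteq> cs ! 2" using nth_eq_iff_index_eq[OF d, of 0 2] l2 by simp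
  have w0: "cs ! 0 \<in> W" using s l2 nth_mem by blast
  have w1: "cs ! 1 \<in> W" using s l2 nth_mem by blast
  have w2: "cs ! 2 \<in> W" using s l2 nth_mem by blast
  have e0': "{cs ! 1, cs ! 0} \<in> E" using e0 by (simp add: insert_commute)
  have "cs ! 0 = cs ! 2" by (rule assms[OF w1 w0 w2 e0' e1])
  with n02 show False by contradiction
qed

lemma cycle_delete:
  assumes "is_cycle (V - F) E cs"
  shows "is_cycle (V - F) (delete_vertices E F) cs"
proof -
  have s: "set cs \<subseteq> V - F" using assms unfolding is_cycle_def by auto
  have m: "\<And>i. i < length cs \<Longrightarrow> cs ! i \<in> V - F \<and> cs ! ((i + 1) mod length cs) \<in> V - F"
  proof -
    fix i assume i: "i < length cs"
    have "0 < length cs" using i by (metis gr_implies_not0 neq0_conv)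
    then have "(i + 1) mod length cs < length cs" by simp
    then show "cs ! i \<in> V - F \<and> cs ! ((i + 1) mod length cs) \<in> V - F"
      using s i nth_mem by blast
  qed
  have "\<forall>i<length cs. {cs ! i, cs ! ((i + 1) mod length cs)} \<in> delete_vertices E F"
  proof (intro allI impI)
    fix i assume i: "i < length cs"
    have e: "{cs ! i, cs ! ((i + 1) mod length cs)} \<in> E" using assms i unfolding is_cycle_def by auto
    have "cs ! i \<notin> F" "cs ! ((i + 1) mod length cs) \<notin> F" using m[OF i] by auto
    then show "{cs ! i, cs ! ((i + 1) mod length cs)} \<in> delete_vertices E F"
      using e unfolding delete_vertices_def by auto
  qed
  then show ?thesis using assms unfolding is_cycle_def by auto
qed


lemma adj_blk: "a < b \<Longrightarrow> b < n \<Longrightarrow> a div K = b div K \<Longrightarrow> \<not> (a mod K = 0 \<and> b mod K = K - 1) \<Longrightarrow> {a, b} \<in> GE K n"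
  by (simp add: GE_iff Pr_def)

lemma adj_zero: "a < b \<Longrightarrow> b < n \<Longrightarrow> a mod K = 0 \<Longrightarrow> b mod K = 0 \<Longrightarrow> {a, b} \<in> GE K n"
  by (simp add: GE_iff Pr_def)

lemma adj_u: "a < b \<Longrightarrow> b < n \<Longrightarrow> a mod K = K - 1 \<Longrightarrow> b mod K = 0 \<Longrightarrow> {a, b} \<in> GE K n"
  by (simp add: GE_iff Pr_def)

lemma blk_lt: "(K::nat) > 0 \<Longrightarrow> a div K = b div K \<Longrightarrow> a mod K < b mod K \<Longrightarrow> a < b"
  by (metis div_mult_mod_eq add_less_cancel_left)

lemma blk_lt2: "(K::nat) > 0 \<Longrightarrow> a div K < b div K \<Longrightarrow> a < b"
  by (meson div_le_mono leI leD)

lemma big_cycle: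
  fixes m K n :: nat and S :: "nat set"
  assumes m1: "m \<ge> 1" and K: "K = 2*m+2" and n: "n = m*K+1" and S: "S \<subseteq> {..<n}"
    and cS: "card S \<ge> 2*m+2"
  shows "\<exists>cs. is_cycle S (GE K n) cs"
proof (rule ccontr)
  assume nc: "\<not> ?thesis"
  have fin: "finite S" using S finite_subset by blast
  have K0: "K > 0" "K \<ge> 4" using K m1 by auto
  define Cs where "Cs = {x\<in>S. x mod K = 0}"
  define Qs where "Qs b = {x\<in>S. x mod K \<noteq> 0 \<and> x div K = b}" for b
  have Sn: "\<And>x. x \<in> S \<Longrightarrow> x < n" using S by auto
  have adjC: "{a, b} \<in> GE K n" if "a \<in> Cs" "b \<in> Cs" "a \<noteq> b" for a b
  proof (cases "a < b")
    case True then show ?thesis using that Sn adj_zero unfolding Cs_def by auto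
  next
    case False then have "b < a" using that by simp
    then show ?thesis using that Sn adj_zero[of b a] unfolding Cs_def by (auto simp: insert_commute)
  qed
  have adjQ: "{a, b} \<in> GE K n" if "a \<in> Qs i" "b \<in> Qs i" "a \<noteq> b" for a b i
  proof (cases "a < b")
    case True then show ?thesis using that Sn adj_blk unfolding Qs_def by auto
  next
    case False then have "b < a" using that by simp
    then show ?thesis using that Sn adj_blk[of b a] unfolding Qs_def by (auto simp: insert_commute)
  qed
  have c3: "card A \<le> 2" if A: "A \<subseteq> S" and adj: "\<And>a b. a \<in> A \<Longrightarrow> b \<in> A \<Longrightarrow> a \<noteq> b \<Longrightarrow> {a, b} \<in> GE K n" for A
  proof (rule ccontr)
    assume "\<not> card A \<le> 2"
    then have "3 \<le> card A" by simp
    then obtain T where T: "T \<subseteq> A" "card T = 3" by (meson obtain_subset_with_card_n)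
    then obtain a b c where abc: "T = {a, b, c}" "a \<noteq> b" "b \<noteq> c" "a \<noteq> c" by (auto simp: card_3_iff)
    have "is_cycle S (GE K n) [a, b, c]"
      using abc T A adj by (intro tri_cycle) auto
    then show False using nc by blast
  qed
  have cC: "card Cs \<le> 2" using c3[of Cs] adjC unfolding Cs_def by auto
  have cQ: "card (Qs i) \<le> 2" for i using c3[of "Qs i"] adjQ unfolding Qs_def by auto
  define R where "R = {x\<in>S. x mod K \<noteq> 0}"
  have SCR: "S = Cs \<union> R" "Cs \<inter> R = {}" unfolding Cs_def R_def by auto
  have gR: "(\<lambda>x. x div K) ` R \<subseteq> {..<m}"
  proof
    fix y assume "y \<in> (\<lambda>x. x div K) ` R"
    then obtain x where x: "x \<in> R" "y = x div K" by auto
    have "x < m*K+1" using x Sn n unfolding R_def by auto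
    moreover have "x \<noteq> m * K" using x unfolding R_def by auto
    ultimately have "x < m * K" by simp
    then show "y \<in> {..<m}" using x K0 by (simp add: div_less_iff_less_mult)
  qed
  have finR: "finite R" using fin unfolding R_def by auto
  have "(\<Sum>y\<in>{..<m}. \<Sum>x\<in>{x \<in> R. x div K = y}. (1::nat)) = (\<Sum>x\<in>R. 1)"
    using sum.group[OF finR _ gR, of "\<lambda>_. 1::nat"] by simp
  moreover have "{x \<in> R. x div K = y} = Qs y" for y unfolding R_def Qs_def by auto
  ultimately have cR: "card R = (\<Sum>y<m. card (Qs y))" by simp
  have cardS: "card S = card Cs + (\<Sum>y<m. card (Qs y))"
  proof -
    have fC: "finite Cs" using fin unfolding Cs_def by auto
    have "card (Cs \<union> R) = card Cs + card R" by (rule card_Un_disjoint[OF fC finR SCR(2)])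
    then show ?thesis using SCR(1) cR by simp
  qed
  have sumle: "(\<Sum>y<m. card (Qs y)) \<le> 2 * m"
    using sum_bounded_above[of "{..<m}" "\<lambda>y. card (Qs y)" 2] cQ by (simp add: mult.commute)
  have cC2: "card Cs = 2" using cardS sumle cC cS by linarith
  have cQ2: "card (Qs i) = 2" if i: "i < m" for i
  proof -
    have "(\<Sum>y<m. card (Qs y)) = card (Qs i) + (\<Sum>y\<in>{..<m} - {i}. card (Qs y))"
      using sum.remove[of "{..<m}" i] i by simp
    moreover have "(\<Sum>y\<in>{..<m} - {i}. card (Qs y)) \<le> 2 * (m - 1)"
      using sum_bounded_above[of "{..<m} - {i}" "\<lambda>y. card (Qs y)" 2] cQ i by (simp add: mult.commute)
    ultimately show ?thesis using cardS cC2 cS cQ[of i] m1 by linarith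
  qed
  have "\<exists>a b. Cs = {a, b} \<and> a \<noteq> b" using cC2 by (simp add: card_2_iff)
  then obtain a b where ab: "Cs = {a, b}" "a \<noteq> b" by blast
  obtain x y where xy: "Cs = {x, y}" "x < y"
  proof (cases "a < b")
    case True then show ?thesis using that ab by blast
  next
    case False then have "b < a" using ab by simp
    then show ?thesis using that[of b a] ab by (simp add: insert_commute)
  qed
  define i where "i = x div K"
  define j where "j = y div K"
  have xm: "x mod K = 0" "y mod K = 0" "x \<in> S" "y \<in> S" using xy unfolding Cs_def by auto
  have xeq: "x = i * K" "y = j * K"
    using xm div_mult_mod_eq[of x K] div_mult_mod_eq[of y K] unfolding i_def j_def by simp_all
  have "i * K < j * K" using xy xeq by simp
  then have io: "i < j" by (simp add: mult_less_cancel2)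
  have "j * K < m * K + 1" using Sn[OF xm(4)] xeq n by simp
  then have "j * K \<le> m * K" by linarith
  then have om: "j \<le> m" using K0 by simp
  have im: "i < m" using io om by simp
  have "\<exists>p q. Qs i = {p, q} \<and> p \<noteq> q" using cQ2[OF im] by (simp add: card_2_iff)
  then obtain p q where pq: "Qs i = {p, q}" "p \<noteq> q" by blast
  define u where "u = i * K + (K - 1)"
  have pQ: "p \<in> S" "p mod K \<noteq> 0" "p div K = i" "q \<in> S" "q mod K \<noteq> 0" "q div K = i"
    using pq unfolding Qs_def by auto
  have Km: "K - 1 < K" "K \<noteq> 0" using K0 by auto
  have umod1: "u mod K = K - 1" unfolding u_def
    by (simp only: mod_mult_self3 mod_less[OF Km(1)])
  have umod2: "u div K = i" unfolding u_def
    by (simp only: div_mult_self3[OF Km(2)] div_less[OF Km(1)] add_0_right)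
  note umod = umod1 umod2
  have blkx: "x div K = i" using xeq K0 by simp
  have xp: "x < p" using blk_lt[OF K0(1), of x p] blkx pQ xm by simp
  have xq: "x < q" using blk_lt[OF K0(1), of x q] blkx pQ xm by simp
  have pn: "p < n" "q < n" "x < n" "y < n" using Sn pQ xm by auto
  have pu: "p mod K = K - 1 \<Longrightarrow> p = u" using pQ div_mult_mod_eq[of p K] unfolding u_def by simp
  have qu: "q mod K = K - 1 \<Longrightarrow> q = u" using pQ div_mult_mod_eq[of q K] unfolding u_def by simp
  show False
  proof (cases "p \<noteq> u \<and> q \<noteq> u")
    case True
    have e1: "{x, p} \<in> GE K n" using adj_blk[where K=K and n=n, OF xp pn(1)] blkx pQ pu True by auto
    have e2: "{q, x} \<in> GE K n" using adj_blk[where K=K and n=n, OF xq pn(2)] blkx pQ qu True by (auto simp: insert_commute)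
    have e3: "{p, q} \<in> GE K n" using adjQ[of p i q] pq by auto
    have "is_cycle S (GE K n) [x, p, q]"
      using e1 e2 e3 xp xq pq pQ xm by (intro tri_cycle) auto
    then show False using nc by blast
  next
    case False
    then obtain r where r: "r \<in> Qs i" "r \<noteq> u" "u \<in> Qs i" using pq by auto
    have rQ: "r \<in> S" "r mod K \<noteq> 0" "r div K = i" "u \<in> S" using r unfolding Qs_def by auto
    have ru: "r mod K = K - 1 \<Longrightarrow> r = u" using rQ div_mult_mod_eq[of r K] unfolding u_def by simp
    have "r mod K < K" using K0 by simp
    then have rlt: "r mod K < K - 1" using ru r(2) by linarith
    have xr: "x < r" using blk_lt[OF K0(1), of x r] blkx rQ xm by simp
    have ru2: "r < u" using blk_lt[OF K0(1), of r u] rlt rQ umod by simp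
    have uy: "u < y" using blk_lt2[OF K0(1), of u y] umod io xeq K0 by simp
    have rn: "r < n" "u < n" using Sn rQ by auto
    have e1: "{x, r} \<in> GE K n" using adj_blk[where K=K and n=n, OF xr rn(1)] blkx rQ ru r by auto
    have e2: "{r, u} \<in> GE K n" using adj_blk[where K=K and n=n, OF ru2 rn(2)] rQ umod by auto
    have e3: "{u, y} \<in> GE K n" using adj_u[where K=K and n=n, OF uy pn(4)] umod xm by auto
    have e4: "{y, x} \<in> GE K n" using adj_zero[where K=K and n=n, OF xy(2) pn(4)] xm by (auto simp: insert_commute)
    have "is_cycle S (GE K n) [x, r, u, y]"
      using e1 e2 e3 e4 xr ru2 uy rQ xm by (intro quad_cycle) auto
    then show False using nc by blast
  qed
qed


lemma GE_back: "j < i \<Longrightarrow> {j, i} \<in> GE K n \<longleftrightarrow> i < n \<and> Pr K j i"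
  by (auto simp: GE_iff)

lemma back_deg:
  fixes m K n i :: nat
  assumes m1: "m \<ge> 1" and K: "K = 2*m+2" and n: "n = m*K+1" and i: "i < n"
  shows "card {j. j < i \<and> {j, i} \<in> GE K n} \<le> 2 * m"
proof -
  have K0: "K > 0" "K \<ge> 4" using K m1 by auto
  define b where "b = i div K"
  have ieq: "i = b * K + i mod K" unfolding b_def by simp
  have imK: "i mod K < K" using K0 by simp
  show ?thesis
  proof (cases "i mod K = 0")
    case True
    have bm: "b \<le> m"
    proof -
      have "b * K < m * K + 1" using i n ieq True by simp
      then have "b * K \<le> m * K" by linarith
      then show ?thesis using K0 by simp
    qed
    have sub: "{j. j < i \<and> {j, i} \<in> GE K n} \<subseteq> (\<lambda>c. c * K) ` {..<b} \<union> (\<lambda>c. c * K + (K - 1)) ` {..<b}"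
    proof
      fix j assume "j \<in> {j. j < i \<and> {j, i} \<in> GE K n}"
      then have j: "j < i" "Pr K j i" using GE_back by auto
      have jb: "j div K < b" using j(1) ieq True K0 by (simp add: div_less_iff_less_mult)
      have jeq: "j = j div K * K + j mod K" by simp
      have "j mod K = 0 \<or> j mod K = K - 1"
        using j(2) jb True unfolding Pr_def b_def by auto
      then show "j \<in> (\<lambda>c. c * K) ` {..<b} \<union> (\<lambda>c. c * K + (K - 1)) ` {..<b}"
        using jb jeq by (metis (no_types, lifting) UnI1 UnI2 add_0_right image_eqI lessThan_iff)
    qed
    have "card ((\<lambda>c. c * K) ` {..<b} \<union> (\<lambda>c. c * K + (K - 1)) ` {..<b}) \<le> b + b"
    proof -
      have c1: "card ((\<lambda>c. c * K) ` {..<b}) \<le> b"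
        using card_image_le[of "{..<b}" "\<lambda>c. c * K"] by simp
      have c2: "card ((\<lambda>c. c * K + (K - 1)) ` {..<b}) \<le> b"
        using card_image_le[of "{..<b}" "\<lambda>c. c * K + (K - 1)"] by simp
      show ?thesis using card_Un_le[of "(\<lambda>c. c * K) ` {..<b}" "(\<lambda>c. c * K + (K - 1)) ` {..<b}"] c1 c2
        by linarith
    qed
    then have "card {j. j < i \<and> {j, i} \<in> GE K n} \<le> b + b"
      using card_mono[OF _ sub] by (meson finite_Un finite_imageI finite_lessThan order_trans)
    then show ?thesis using bm by simp
  next
    case False
    have blk: "j div K = b \<and> \<not> (j mod K = 0 \<and> i mod K = K - 1)" if "j < i" "{j, i} \<in> GE K n" for j
      using that False GE_back[of j i K n] unfolding Pr_def b_def by auto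
    have low: "b * K \<le> j" if "j div K = b" for j
      using that by (metis div_mult_mod_eq le_add1)
    show ?thesis
    proof (cases "i mod K = K - 1")
      case True
      have sub: "{j. j < i \<and> {j, i} \<in> GE K n} \<subseteq> {b * K + 1..<i}"
      proof
        fix j assume "j \<in> {j. j < i \<and> {j, i} \<in> GE K n}"
        then have j: "j < i" "j div K = b" "j mod K \<noteq> 0" using blk True by auto
        have "j = b * K + j mod K" using j(2) by (metis div_mult_mod_eq)
        then show "j \<in> {b * K + 1..<i}" using j by simp
      qed
      have "card {b * K + 1..<i} = 2 * m" using ieq True K by simp
      then show ?thesis using card_mono[OF _ sub] by simp
    next
      case False2: False
      have sub: "{j. j < i \<and> {j, i} \<in> GE K n} \<subseteq> {b * K..<i}"
        using blk low by auto
      have "card {b * K..<i} = i mod K" using ieq by simp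
      moreover have "i mod K \<le> 2 * m" using imK False2 K by linarith
      ultimately show ?thesis using card_mono[OF _ sub] by simp
    qed
  qed
qed


lemma dm_simp:
  fixes K b c :: nat
  assumes "c < K"
  shows "(b * K + c) mod K = c" "(b * K + c) div K = b"
proof -
  have K0: "K \<noteq> 0" using assms by simp
  show "(b * K + c) mod K = c" by (simp only: mod_mult_self3 mod_less[OF assms])
  show "(b * K + c) div K = b" by (simp only: div_mult_self3[OF K0] div_less[OF assms] add_0_right)
qed

definition Wset :: "nat \<Rightarrow> nat \<Rightarrow> nat set" where
  "Wset m K = {m * K} \<union> (\<lambda>b. b * K + 1) ` {..<m} \<union> (\<lambda>b. b * K + 2) ` {..<m}"

lemma Wset_char:
  assumes K: "(K::nat) \<ge> 4" and w: "w \<in> Wset m K"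
  shows "(w mod K = 0 \<and> w div K = m) \<or> ((w mod K = 1 \<or> w mod K = 2) \<and> w div K < m)"
proof -
  have a: "(0::nat) < K" "(1::nat) < K" "(2::nat) < K" using K by auto
  show ?thesis using w dm_simp[OF a(1), of m] dm_simp[OF a(2)] dm_simp[OF a(3)]
    unfolding Wset_def by auto
qed

lemma Wset_Pr:
  assumes K: "(K::nat) \<ge> 4" and x: "x \<in> Wset m K" and y: "y \<in> Wset m K" and xy: "x < y" and P: "Pr K x y"
  shows "(x mod K = 1 \<or> x mod K = 2) \<and> (y mod K = 1 \<or> y mod K = 2) \<and> x div K = y div K"
proof -
  have cx: "(x mod K = 0 \<and> x div K = m) \<or> ((x mod K = 1 \<or> x mod K = 2) \<and> x div K < m)"
    using Wset_char[OF K x] .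
  have cy: "(y mod K = 0 \<and> y div K = m) \<or> ((y mod K = 1 \<or> y mod K = 2) \<and> y div K < m)"
    using Wset_char[OF K y] .
  have eq: "x = y" if "x mod K = y mod K" "x div K = y div K"
    using that by (metis div_mult_mod_eq)
  have nK: "K - 1 \<noteq> 0" "K - 1 \<noteq> 1" "K - 1 \<noteq> 2" using K by auto
  have xny: "x \<noteq> y" using xy by simp
  from P consider (d1) "x div K = y div K" "\<not> (x mod K = 0 \<and> y mod K = K - 1)"
    | (d2) "x mod K = 0" "y mod K = 0" | (d3) "x mod K = K - 1" "y mod K = 0"
    unfolding Pr_def by argo
  then show ?thesis
  proof cases
    case d1
    show ?thesis
    proof (cases "x mod K = 0")
      case True
      then have "x div K = m" using cx by simp
      then have "y div K = m" using d1 by simp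
      then have "y mod K = 0" using cy by simp
      then have False using eq[of] True d1 xny by simp
      then show ?thesis ..
    next
      case False
      then have px: "(x mod K = 1 \<or> x mod K = 2) \<and> x div K < m" using cx by argo
      then have "y div K < m" using d1 by simp
      then have "(y mod K = 1 \<or> y mod K = 2)" using cy by auto
      then show ?thesis using px d1 by argo
    qed
  next
    case d2
    then have "x div K = m" "y div K = m" using cx cy by auto
    then have False using eq d2 xny by simp
    then show ?thesis ..
  next
    case d3
    then have False using cx nK by auto
    then show ?thesis ..
  qed
qed

lemma Wset_adj:
  assumes K: "(K::nat) \<ge> 4" and v: "v \<in> Wset m K" and a: "a \<in> Wset m K" and e: "{v, a} \<in> GE K n"
  shows "(v mod K = 1 \<or> v mod K = 2) \<and> (a mod K = 1 \<or> a mod K = 2) \<and> v div K = a div K \<and> v \<noteq> a"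
proof -
  from e have "(v < a \<and> a < n \<and> Pr K v a) \<or> (a < v \<and> v < n \<and> Pr K a v)" unfolding GE_iff .
  then show ?thesis
  proof
    assume h: "v < a \<and> a < n \<and> Pr K v a"
    then have "(v mod K = 1 \<or> v mod K = 2) \<and> (a mod K = 1 \<or> a mod K = 2) \<and> v div K = a div K"
      using Wset_Pr[OF K v a] by simp
    moreover have "v \<noteq> a" using h by simp
    ultimately show ?thesis by argo
  next
    assume h: "a < v \<and> v < n \<and> Pr K a v"
    then have "(a mod K = 1 \<or> a mod K = 2) \<and> (v mod K = 1 \<or> v mod K = 2) \<and> a div K = v div K"
      using Wset_Pr[OF K a v] by simp
    moreover have "v \<noteq> a" using h by simp
    ultimately show ?thesis by argo
  qed
qed

lemma Wset_match:
  assumes K: "(K::nat) \<ge> 4" and v: "v \<in> Wset m K" and a: "a \<in> Wset m K" and b: "b \<in> Wset m K"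
    and ea: "{v, a} \<in> GE K n" and eb: "{v, b} \<in> GE K n"
  shows "a = b"
proof -
  have A: "(v mod K = 1 \<or> v mod K = 2) \<and> (a mod K = 1 \<or> a mod K = 2) \<and> v div K = a div K \<and> v \<noteq> a"
    using Wset_adj[OF K v a ea] .
  have B: "(v mod K = 1 \<or> v mod K = 2) \<and> (b mod K = 1 \<or> b mod K = 2) \<and> v div K = b div K \<and> v \<noteq> b"
    using Wset_adj[OF K v b eb] .
  have eq: "x = y" if "x mod K = y mod K" "x div K = y div K" for x y
    using that by (metis div_mult_mod_eq)
  have va: "v mod K \<noteq> a mod K"
  proof
    assume "v mod K = a mod K"
    then have "v = a" by (rule eq) (use A in argo)
    then show False using A by argo
  qed
  have vb: "v mod K \<noteq> b mod K"
  proof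
    assume "v mod K = b mod K"
    then have "v = b" by (rule eq) (use B in argo)
    then show False using B by argo
  qed
  have ab: "a mod K = b mod K" using A B va vb by (elim conjE disjE) simp_all
  show ?thesis by (rule eq[OF ab]) (use A B in argo)
qed

lemma Wset_card:
  assumes K: "(K::nat) \<ge> 4"
  shows "card (Wset m K) = 2 * m + 1"
proof -
  have a: "(0::nat) < K" "(1::nat) < K" "(2::nat) < K" using K by auto
  have i1: "inj_on (\<lambda>b. b * K + 1) {..<m}" using a by (auto simp: inj_on_def)
  have i2: "inj_on (\<lambda>b. b * K + 2) {..<m}" using a by (auto simp: inj_on_def)
  have c1: "card ((\<lambda>b. b * K + 1) ` {..<m}) = m" using card_image[OF i1] by simp
  have c2: "card ((\<lambda>b. b * K + 2) ` {..<m}) = m" using card_image[OF i2] by simp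
  have d12: "(\<lambda>b. b * K + 1) ` {..<m} \<inter> (\<lambda>b. b * K + 2) ` {..<m} = {}"
  proof -
    have "\<forall>x \<in> (\<lambda>b. b * K + 1) ` {..<m}. x mod K = 1" using dm_simp[OF a(2)] by auto
    moreover have "\<forall>x \<in> (\<lambda>b. b * K + 2) ` {..<m}. x mod K = 2" using dm_simp[OF a(3)] by auto
    ultimately have "\<And>x. x \<in> (\<lambda>b. b * K + 1) ` {..<m} \<Longrightarrow> x \<in> (\<lambda>b. b * K + 2) ` {..<m} \<Longrightarrow> False"
    proof -
      fix x assume h: "\<forall>x \<in> (\<lambda>b. b * K + 1) ` {..<m}. x mod K = 1" "\<forall>x \<in> (\<lambda>b. b * K + 2) ` {..<m}. x mod K = 2"
        "x \<in> (\<lambda>b. b * K + 1) ` {..<m}" "x \<in> (\<lambda>b. b * K + 2) ` {..<m}"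
      then have "x mod K = 1" "x mod K = 2" by auto
      then show False by simp
    qed
    then show ?thesis by blast
  qed
  have d0: "{m * K} \<inter> ((\<lambda>b. b * K + 1) ` {..<m} \<union> (\<lambda>b. b * K + 2) ` {..<m}) = {}"
  proof -
    have nz: "\<And>x. x \<in> (\<lambda>b. b * K + 1) ` {..<m} \<union> (\<lambda>b. b * K + 2) ` {..<m} \<Longrightarrow> x mod K \<noteq> 0"
      using dm_simp[OF a(2)] dm_simp[OF a(3)] by auto
    have "m * K \<notin> (\<lambda>b. b * K + 1) ` {..<m} \<union> (\<lambda>b. b * K + 2) ` {..<m}"
    proof
      assume "m * K \<in> (\<lambda>b. b * K + 1) ` {..<m} \<union> (\<lambda>b. b * K + 2) ` {..<m}"
      then have "(m * K) mod K \<noteq> 0" by (rule nz)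
      then show False by simp
    qed
    then show ?thesis by blast
  qed
  have "card ((\<lambda>b. b * K + 1) ` {..<m} \<union> (\<lambda>b. b * K + 2) ` {..<m}) = 2 * m"
    using card_Un_disjoint[OF _ _ d12] c1 c2 by simp
  moreover have "card ({m * K} \<union> ((\<lambda>b. b * K + 1) ` {..<m} \<union> (\<lambda>b. b * K + 2) ` {..<m}))
     = 1 + card ((\<lambda>b. b * K + 1) ` {..<m} \<union> (\<lambda>b. b * K + 2) ` {..<m})"
    using card_Un_disjoint[OF _ _ d0] by simp
  ultimately show ?thesis unfolding Wset_def by (simp add: Un_assoc)
qed

lemma Wset_sub:
  assumes K: "K = 2 * m + 2"
  shows "Wset m K \<subseteq> {..<m * K + 1}"
proof -
  have "b * K + 2 < m * K + 1" if "b < m" for b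
  proof -
    have "(b + 1) * K \<le> m * K" using that mult_le_mono1[of "b + 1" m K] by simp
    then show ?thesis using K by simp
  qed
  note bd = this
  show ?thesis
  proof
    fix x assume "x \<in> Wset m K"
    then consider "x = m * K" | b where "b < m" "x = b * K + 1" | b where "b < m" "x = b * K + 2"
      unfolding Wset_def by auto
    then show "x \<in> {..<m * K + 1}"
    proof cases
      case 1 then show ?thesis by simp
    next
      case (2 b) then show ?thesis using bd[of b] K by simp
    next
      case (3 b) then show ?thesis using bd[of b] K by simp
    qed
  qed
qed
theorem mainTheorem4:
  fixes k :: nat
  assumes "even k" and "k \<ge> 2"
  shows "\<exists>(V :: nat set) (E :: nat set set).
           simple_graph V E \<and>
           degeneracy V E \<le> k \<and>
           card V = (k + 2) * k div 2 + 1 \<and>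
           fvs_number V E = k ^ 2 div 2"
proof -
  obtain m where k: "k = 2 * m" using assms(1) by (auto elim: evenE)
  have m1: "m \<ge> 1" using assms(2) k by simp
  define K where "K = 2 * m + 2"
  define n where "n = m * K + 1"
  define V where "V = {..<n}"
  define E where "E = GE K n"
  have K4: "K \<ge> 4" using m1 unfolding K_def by simp
  have finV: "finite V" unfolding V_def by simp
  have sg: "simple_graph V E"
    unfolding simple_graph_def
  proof (intro conjI ballI)
    show "finite V" by (rule finV)
    fix e assume "e \<in> E"
    then obtain x y where "e = {x, y}" "x < y" "y < n" unfolding E_def GE_def by auto
    then show "\<exists>u v. u \<noteq> v \<and> u \<in> V \<and> v \<in> V \<and> e = {u, v}" unfolding V_def
      by (intro exI[of _ x] exI[of _ y]) auto
  qed
  have ord: "is_elim_ordering V E k [0..<n]"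
    unfolding is_elim_ordering_def
  proof (intro conjI allI impI)
    show "distinct [0..<n]" by simp
    show "set [0..<n] = V" unfolding V_def by auto
    fix i assume i: "i < length [0..<n]"
    then have i': "i < n" by simp
    have "{j. j < i \<and> {[0..<n] ! j, [0..<n] ! i} \<in> E} = {j. j < i \<and> {j, i} \<in> GE K n}"
      using i' unfolding E_def by auto
    then show "card {j. j < i \<and> {[0..<n] ! j, [0..<n] ! i} \<in> E} \<le> k"
      using back_deg[OF m1 K_def n_def i'] k by simp
  qed
  have deg: "degeneracy V E \<le> k"
    unfolding degeneracy_def using ord by (intro Least_le) blast
  have cardV: "card V = n" unfolding V_def by simp
  have nval: "n = 2 * m * m + 2 * m + 1" unfolding n_def K_def by (simp add: algebra_simps)
  have cV: "card V = (k + 2) * k div 2 + 1"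
  proof -
    have "(k + 2) * k = 2 * (2 * m * m + 2 * m)" using k by (simp add: algebra_simps)
    then show ?thesis using cardV nval by simp
  qed
  define W where "W = Wset m K"
  define F0 where "F0 = V - W"
  have WV: "W \<subseteq> V" unfolding W_def V_def n_def using Wset_sub[OF K_def] .
  have cW: "card W = 2 * m + 1" unfolding W_def using Wset_card[OF K4] .
  have VF0: "V - F0 = W" unfolding F0_def using WV by auto
  have fvs0: "is_fvs V E F0"
    unfolding is_fvs_def
  proof
    show "F0 \<subseteq> V" unfolding F0_def by auto
    show "acyclic_graph (V - F0) (delete_vertices E F0)"
      unfolding VF0
    proof (rule matching_acyclic)
      fix v a b assume "v \<in> W" "a \<in> W" "b \<in> W" "{v, a} \<in> delete_vertices E F0" "{v, b} \<in> delete_vertices E F0"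
      then show "a = b" using Wset_match[OF K4, of v m a b n] unfolding W_def E_def delete_vertices_def by auto
    qed
  qed
  have cF0: "card F0 = 2 * m * m"
  proof -
    have "card F0 = card V - card W" unfolding F0_def using card_Diff_subset[OF finite_subset[OF WV finV] WV] .
    then show ?thesis using cardV cW nval by simp
  qed
  have lower: "2 * m * m \<le> card F" if F: "is_fvs V E F" for F
  proof -
    have FV: "F \<subseteq> V" and ac: "acyclic_graph (V - F) (delete_vertices E F)" using F unfolding is_fvs_def by auto
    have "card (V - F) \<le> 2 * m + 1"
    proof (rule ccontr)
      assume "\<not> card (V - F) \<le> 2 * m + 1"
      then have "card (V - F) \<ge> 2 * m + 2" by simp
      moreover have "V - F \<subseteq> {..<n}" unfolding V_def by auto
      ultimately obtain cs where "is_cycle (V - F) (GE K n) cs"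
        using big_cycle[OF m1 K_def n_def] by blast
      then have "is_cycle (V - F) (delete_vertices E F) cs" unfolding E_def by (rule cycle_delete)
      then show False using ac unfolding acyclic_graph_def by blast
    qed
    moreover have "card (V - F) = card V - card F" using card_Diff_subset[OF finite_subset[OF FV finV] FV] .
    ultimately show ?thesis using cardV nval by simp
  qed
  have fv: "fvs_number V E = 2 * m * m"
    unfolding fvs_number_def
  proof (rule Least_equality)
    show "\<exists>F. is_fvs V E F \<and> card F = 2 * m * m" using fvs0 cF0 by blast
  next
    fix y assume "\<exists>F. is_fvs V E F \<and> card F = y"
    then show "2 * m * m \<le> y" using lower by blast
  qed
  have "k ^ 2 div 2 = 2 * m * m" using k by (simp add: power2_eq_square)
  then show ?thesis using sg deg cV fv by metis
qed

end
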